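(* Let $H$ be a complex Hadamard matrix of order $n$, and let $T$ be a trade in $H$. Then $|T|\ge n$.
   Context: A complex Hadamard matrix of order $n$ is an $n\times n$ matrix with all entries of modulus $1$ and $HH^{\ast}=nI_n$. A trade in $H$ is a nonempty set $T$ of positions (entries) of $H$ which can be altered to obtain a different complex Hadamard matrix, i.e. there is a complex Hadamard matrix $K$ of order $n$ with $K_{ij}\neq H_{ij}$ for $(i,j)\in T$ and $K_{ij}=H_{ij}$ for $(i,j)\notin T$. The size of $T$ is its number of entries $|T|$. *)

theory Defs
  imports Complex_Main
begin

text \<open>Matrices of order n are represented as functions nat => nat => complex,
  only the entries with indices i < n, j < n being relevant.\<close>

definition complex_hadamard :: "nat \<Rightarrow> (nat \<Rightarrow> nat \<Rightarrow> complex) \<Rightarrow> bool" where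
  "complex_hadamard n H \<longleftrightarrow>
     (\<forall>i<n. \<forall>j<n. norm (H i j) = 1) \<and>
     (\<forall>i<n. \<forall>k<n. (\<Sum>j<n. H i j * cnj (H k j)) = (if i = k then of_nat n else 0))"

definition is_trade :: "nat \<Rightarrow> (nat \<Rightarrow> nat \<Rightarrow> complex) \<Rightarrow> (nat \<times> nat) set \<Rightarrow> bool" where
  "is_trade n H T \<longleftrightarrow>
     T \<noteq> {} \<and> T \<subseteq> {..<n} \<times> {..<n} \<and>
     (\<exists>K. complex_hadamard n K \<and>
        (\<forall>i<n. \<forall>j<n. ((i, j) \<in> T \<longrightarrow> K i j \<noteq> H i j) \<and>
                       ((i, j) \<notin> T \<longrightarrow> K i j = H i j)))"

end

theory Submission imports Defs "Jordan_Normal_Form.Determinant" begin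

lemma col_orth:
  assumes h: "complex_hadamard n H" and i: "i<n" and l: "l<n"
  shows "(\<Sum>k<n. cnj (H k i) * H k l) = (if i=l then of_nat n else 0)"
proof -
  have np: "n > 0" using i by simp
  define A where "A = mat n n (\<lambda>(i,j). H i j)"
  define B where "B = mat n n (\<lambda>(i,j). cnj (H j i) / of_nat n)"
  have AB: "A * B = 1\<^sub>m n"
  proof (rule eq_matI)
    fix a b assume a: "a < dim_row (1\<^sub>m n)" and b: "b < dim_col (1\<^sub>m n :: complex mat)"
    have "(A*B) $$ (a,b) = (\<Sum>j<n. H a j * cnj (H b j)) / of_nat n"
      using a b by (simp add: A_def B_def scalar_prod_def sum_divide_distrib atLeast0LessThan)
    also have "\<dots> = 1\<^sub>m n $$ (a,b)" using a b h np unfolding complex_hadamard_def by auto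
    finally show "(A*B) $$ (a,b) = 1\<^sub>m n $$ (a,b)" .
  qed (auto simp: A_def B_def)
  have "B * A = 1\<^sub>m n"
    by (rule mat_mult_left_right_inverse[OF _ _ AB]) (auto simp: A_def B_def)
  hence "(B*A) $$ (i,l) = 1\<^sub>m n $$ (i,l)" by simp
  hence "(\<Sum>k<n. cnj (H k i) * H k l) / of_nat n = (if i = l then 1 else 0)"
    using i l by (simp add: A_def B_def scalar_prod_def sum_divide_distrib atLeast0LessThan)
  thus ?thesis using np by (auto simp: field_simps split: if_splits)
qed

lemma cs_card:
  fixes a :: "nat \<Rightarrow> real"
  assumes "finite S"
  shows "(\<Sum>j\<in>S. a j)^2 \<le> real (card S) * (\<Sum>j\<in>S. (a j)^2)"
proof -
  have "0 \<le> (\<Sum>j\<in>S. \<Sum>l\<in>S. (a j - a l)^2)" by (intro sum_nonneg) auto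
  also have "\<dots> = (\<Sum>j\<in>S. \<Sum>l\<in>S. (a j)^2 + (a l)^2 - 2 * (a j * a l))"
    by (simp add: power2_diff mult.assoc)
  also have "\<dots> = (\<Sum>j\<in>S. real (card S) * (a j)^2 + (\<Sum>l\<in>S. (a l)^2) - 2 * (a j * (\<Sum>l\<in>S. a l)))"
    by (intro sum.cong refl) (simp add: sum_subtractf sum.distrib sum_distrib_left)
  also have "\<dots> = 2 * (real (card S) * (\<Sum>j\<in>S. (a j)^2)) - 2 * (\<Sum>j\<in>S. a j)^2"
    by (simp add: sum_subtractf sum.distrib sum_distrib_left[symmetric] sum_distrib_right[symmetric] power2_eq_square)
  finally show ?thesis by simp
qed

lemma uncertainty:
  assumes h: "complex_hadamard n H" and S: "S \<subseteq> {..<n}"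
    and dS: "\<And>j. j < n \<Longrightarrow> j \<notin> S \<Longrightarrow> d j = 0"
    and z: "z < n" "d z \<noteq> 0" and Q: "Q \<subseteq> {..<n}"
    and yQ: "\<And>k. k < n \<Longrightarrow> k \<notin> Q \<Longrightarrow> (\<Sum>j<n. d j * cnj (H k j)) = 0"
  shows "n \<le> card S * card Q"
proof -
  define y where "y k = (\<Sum>j<n. d j * cnj (H k j))" for k
  define N where "N = (\<Sum>j<n. (norm (d j))^2)"
  have fS: "finite S" using S finite_subset by blast
  have fQ: "finite Q" using Q finite_subset by blast
  have H1: "norm (H k j) = 1" if "k<n" "j<n" for k j using h that unfolding complex_hadamard_def by auto
  have "(\<Sum>k<n. y k * cnj (y k)) = (\<Sum>k<n. \<Sum>j<n. \<Sum>l<n. d j * cnj (d l) * (cnj (H k j) * H k l))"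
  proof (intro sum.cong refl)
    fix k
    have "cnj (y k) = (\<Sum>l<n. cnj (d l) * H k l)" unfolding y_def by simp
    hence "y k * cnj (y k) = (\<Sum>j<n. d j * cnj (H k j)) * (\<Sum>l<n. cnj (d l) * H k l)"
      unfolding y_def by simp
    also have "\<dots> = (\<Sum>j<n. \<Sum>l<n. (d j * cnj (H k j)) * (cnj (d l) * H k l))"
      by (rule sum_product)
    also have "\<dots> = (\<Sum>j<n. \<Sum>l<n. d j * cnj (d l) * (cnj (H k j) * H k l))"
      by (intro sum.cong refl) (simp add: mult_ac)
    finally show "y k * cnj (y k) = (\<Sum>j<n. \<Sum>l<n. d j * cnj (d l) * (cnj (H k j) * H k l))" .
  qed
  also have "\<dots> = (\<Sum>j<n. \<Sum>l<n. d j * cnj (d l) * (\<Sum>k<n. cnj (H k j) * H k l))"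
  proof -
    have "(\<Sum>k<n. \<Sum>j<n. \<Sum>l<n. d j * cnj (d l) * (cnj (H k j) * H k l))
        = (\<Sum>j<n. \<Sum>k<n. \<Sum>l<n. d j * cnj (d l) * (cnj (H k j) * H k l))"
      by (rule sum.swap)
    also have "\<dots> = (\<Sum>j<n. \<Sum>l<n. \<Sum>k<n. d j * cnj (d l) * (cnj (H k j) * H k l))"
      by (rule sum.cong[OF refl], rule sum.swap)
    also have "\<dots> = (\<Sum>j<n. \<Sum>l<n. d j * cnj (d l) * (\<Sum>k<n. cnj (H k j) * H k l))"
      by (simp only: sum_distrib_left)
    finally show ?thesis .
  qed
  also have "\<dots> = (\<Sum>j<n. \<Sum>l<n. if l = j then d j * cnj (d j) * of_nat n else 0)"
    by (intro sum.cong refl) (simp add: col_orth[OF h])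
  also have "\<dots> = of_nat n * (\<Sum>j<n. d j * cnj (d j))"
    by (simp add: sum_distrib_left algebra_simps)
  finally have e1: "(\<Sum>k<n. y k * cnj (y k)) = of_nat n * (\<Sum>j<n. d j * cnj (d j))" .
  have e2: "(\<Sum>k<n. (norm (y k))^2) = real n * N"
  proof -
    have "complex_of_real (\<Sum>k<n. (norm (y k))^2) = complex_of_real (real n * N)"
      using e1 by (simp add: N_def complex_norm_square of_real_sum sum_distrib_left del: of_real_power)
    thus ?thesis using of_real_eq_iff by blast
  qed
  have NS: "N = (\<Sum>j\<in>S. (norm (d j))^2)"
    unfolding N_def by (rule sum.mono_neutral_right) (use S dS in auto)
  have Npos: "N > 0"
  proof -
    have "(norm (d z))^2 \<le> N" unfolding N_def
      by (rule member_le_sum) (use z in auto)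
    moreover have "(norm (d z))^2 > 0" using z by simp
    ultimately show ?thesis by linarith
  qed
  have yb: "(norm (y k))^2 \<le> real (card S) * N" if k: "k < n" for k
  proof -
    have "y k = (\<Sum>j\<in>S. d j * cnj (H k j))"
      unfolding y_def by (rule sum.mono_neutral_right) (use S dS in auto)
    hence "norm (y k) \<le> (\<Sum>j\<in>S. norm (d j * cnj (H k j)))" by (simp add: norm_sum)
    also have "\<dots> = (\<Sum>j\<in>S. norm (d j))"
      by (intro sum.cong refl) (use S k H1 in \<open>auto simp: norm_mult\<close>)
    finally have "(norm (y k))^2 \<le> (\<Sum>j\<in>S. norm (d j))^2"
      by (intro power_mono) auto
    also have "\<dots> \<le> real (card S) * N" unfolding NS by (rule cs_card[OF fS])
    finally show ?thesis .
  qed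
  have "real n * N = (\<Sum>k\<in>Q. (norm (y k))^2)"
    unfolding e2[symmetric] by (rule sum.mono_neutral_right) (use Q yQ y_def in auto)
  also have "\<dots> \<le> (\<Sum>k\<in>Q. real (card S) * N)"
    by (rule sum_mono) (use Q yb in auto)
  also have "\<dots> = real (card S * card Q) * N" by simp
  finally have "real n \<le> real (card S * card Q)" using Npos by simp
  thus ?thesis by linarith
qed
theorem theorem7p3:
  fixes n :: nat and H :: "nat \<Rightarrow> nat \<Rightarrow> complex" and T :: "(nat \<times> nat) set"
  assumes "complex_hadamard n H"
    and "is_trade n H T"
  shows "card T \<ge> n"
proof -
  obtain K where K: "complex_hadamard n K" and KT:
    "\<And>i j. i<n \<Longrightarrow> j<n \<Longrightarrow> ((i, j) \<in> T \<longrightarrow> K i j \<noteq> H i j) \<and> ((i, j) \<notin> T \<longrightarrow> K i j = H i j)"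
    and Tne: "T \<noteq> {}" and Tsub: "T \<subseteq> {..<n} \<times> {..<n}"
    using assms(2) unfolding is_trade_def by blast
  define R where "R = fst ` T"
  define S where "S i = {j. (i,j) \<in> T}" for i
  have fT: "finite T" using Tsub finite_subset by blast
  have fR: "finite R" unfolding R_def using fT by simp
  have RS: "R \<subseteq> {..<n}" unfolding R_def using Tsub by auto
  have Rne: "R \<noteq> {}" unfolding R_def using Tne by simp
  have TS: "T = Sigma R S" unfolding R_def S_def by force
  have fS: "finite (S i)" for i
  proof -
    have "S i \<subseteq> snd ` T" unfolding S_def by force
    thus ?thesis using fT finite_subset by blast
  qed
  have key: "n \<le> card (S i) * card R" if iR: "i \<in> R" for i
  proof -
    have i: "i < n" using iR RS by auto
    obtain j0 where j0: "(i, j0) \<in> T" using iR unfolding R_def by force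
    have j0n: "j0 < n" using j0 Tsub by auto
    show ?thesis
    proof (rule uncertainty[OF assms(1), where d = "\<lambda>j. K i j - H i j" and z = j0])
      show "S i \<subseteq> {..<n}" unfolding S_def using Tsub by auto
      show "K i j - H i j = 0" if "j < n" "j \<notin> S i" for j using KT[OF i that(1)] that unfolding S_def by simp
      show "j0 < n" by fact
      show "K i j0 - H i j0 \<noteq> 0" using KT[OF i j0n] j0 by simp
      show "R \<subseteq> {..<n}" by fact
      show "(\<Sum>j<n. (K i j - H i j) * cnj (H k j)) = 0" if k: "k < n" "k \<notin> R" for k
      proof -
        have ki: "k \<noteq> i" using k iR by auto
        have eq: "K k j = H k j" if "j < n" for j
        proof -
          have "(k, j) \<notin> T" using k unfolding R_def by force
          thus ?thesis using KT[OF k(1) that] by simp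
        qed
        have "(\<Sum>j<n. (K i j - H i j) * cnj (H k j)) =
              (\<Sum>j<n. K i j * cnj (K k j)) - (\<Sum>j<n. H i j * cnj (H k j))"
          by (simp add: eq algebra_simps sum_subtractf)
        also have "\<dots> = 0" using K assms(1) i k ki unfolding complex_hadamard_def by simp
        finally show ?thesis .
      qed
    qed
  qed
  have cT: "card T = (\<Sum>i\<in>R. card (S i))" unfolding TS using fR fS by (simp add: card_SigmaI)
  have "n * card R = (\<Sum>i\<in>R. n)" by simp
  also have "\<dots> \<le> (\<Sum>i\<in>R. card (S i) * card R)" by (rule sum_mono) (rule key)
  also have "\<dots> = card T * card R" by (simp add: cT sum_distrib_right)
  finally have "n * card R \<le> card T * card R" .
  moreover have "card R > 0" using fR Rne by (simp add: card_gt_0_iff)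
  ultimately show ?thesis by simp
qed
end
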